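(* For every $1\le i\le n$ and $1\le j\le n-1$, the elements $\tau_i$ and $\sigma_i$ of $\hat\Lambda$ are invariant under $s_j$ (exchange of $a_j$ and $a_{j+1}$ in the coefficients).
   Context: Fix $n\ge2$. $R(T)=\mathbb{Z}[e^{\pm a_1},\dots,e^{\pm a_n}]/(e^{a_1+\cdots+a_n}-1)$, $b_i=1-e^{-a_i}$. $\hat\Lambda$: symmetric formal power series in $y=(y_1,y_2,\dots)$ with coefficients in the fraction field of $R(T)$; $\Omega(b_i|y)=\prod_{j\ge1}(1-b_iy_j)^{-1}$. $Z=(z_{pq})$ is the $n\times n$ upper triangular matrix with $z_{pp}=\Omega(b_p|y)$ and $z_{pq}=\frac{z_{p,q-1}-z_{p+1,q}}{e^{-a_q}-e^{-a_p}}$ for $p<q$. $A$: upper triangular with diagonal $(e^{-a_1},\dots,e^{-a_n})$, $-1$ on the superdiagonal, $0$ elsewhere. $P$: lower unitriangular with $P_{pq}=e_{p-q}(e^{-a_1},\dots,e^{-a_{p-1}})$. $\sigma_i=\det(ZP)_{[1,i]}^{[1,i]}$, $\tau_i=\det(ZAP)_{[1,i]}^{[1,i]}$ (leading principal minors). *)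

theory Defs
  imports "HOL-Library.Poly_Mapping" "HOL-Combinatorics.Permutations"
begin

text \<open>Formal power series in the variables y_1, y_2, ... with coefficients in a field 'a:
  a series is the function sending a monomial y^m (m :: nat =>0 nat, finitely supported
  exponent vector) to its coefficient.\<close>
type_synonym 'a ps = "(nat \<Rightarrow>\<^sub>0 nat) \<Rightarrow> 'a"

definition mono_deg :: "(nat \<Rightarrow>\<^sub>0 nat) \<Rightarrow> nat" where
  "mono_deg m = (\<Sum>k\<in>Poly_Mapping.keys m. Poly_Mapping.lookup m k)"

definition ps_one :: "'a::field ps" where
  "ps_one = (\<lambda>m. if m = 0 then 1 else 0)"

definition ps_mult :: "'a::field ps \<Rightarrow> 'a ps \<Rightarrow> 'a ps" where
  "ps_mult f g = (\<lambda>m. \<Sum>(m1, m2) \<in> {(m1, m2). m1 + m2 = m}. f m1 * g m2)"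

text \<open>Omega(b|y) = prod_j (1 - b y_j)^(-1); its coefficient at y^m is b^(|m|).\<close>
definition Omega :: "'a::field \<Rightarrow> 'a ps" where
  "Omega b = (\<lambda>m. b ^ mono_deg m)"

definition ps_det :: "nat \<Rightarrow> (nat \<Rightarrow> nat \<Rightarrow> 'a::field ps) \<Rightarrow> 'a ps" where
  "ps_det k M = (\<lambda>m. \<Sum>\<pi> \<in> {\<pi>. \<pi> permutes {1..k}}.
      of_int (sign \<pi>) * foldr ps_mult (map (\<lambda>r. M r (\<pi> r)) [1..<Suc k]) ps_one m)"

text \<open>x p plays the role of e^{-a_p}; b_p = 1 - x p.
  zz x d p is the entry z_{p,p+d} of the matrix Z.\<close>
fun zz :: "(nat \<Rightarrow> 'a::field) \<Rightarrow> nat \<Rightarrow> nat \<Rightarrow> 'a ps" where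
  "zz x 0 p = Omega (1 - x p)"
| "zz x (Suc d) p = (\<lambda>m. (zz x d p m - zz x d (Suc p) m) / (x (p + Suc d) - x p))"

definition Zmat :: "(nat \<Rightarrow> 'a::field) \<Rightarrow> nat \<Rightarrow> nat \<Rightarrow> 'a ps" where
  "Zmat x p q = (if p \<le> q then zz x (q - p) p else (\<lambda>_. 0))"

definition Amat :: "(nat \<Rightarrow> 'a::field) \<Rightarrow> nat \<Rightarrow> nat \<Rightarrow> 'a" where
  "Amat x p q = (if q = p then x p else if q = Suc p then -1 else 0)"

definition esym :: "nat \<Rightarrow> (nat \<Rightarrow> 'a::field) \<Rightarrow> nat \<Rightarrow> 'a" where
  "esym k x r = (\<Sum>T \<in> {T. T \<subseteq> {1..r} \<and> card T = k}. \<Prod>t\<in>T. x t)"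

definition Pmat :: "(nat \<Rightarrow> 'a::field) \<Rightarrow> nat \<Rightarrow> nat \<Rightarrow> 'a" where
  "Pmat x p q = (if q \<le> p then esym (p - q) x (p - 1) else 0)"

definition ps_mat_scal :: "nat \<Rightarrow> (nat \<Rightarrow> nat \<Rightarrow> 'a::field ps) \<Rightarrow> (nat \<Rightarrow> nat \<Rightarrow> 'a)
    \<Rightarrow> nat \<Rightarrow> nat \<Rightarrow> 'a ps" where
  "ps_mat_scal n M C p q = (\<lambda>m. \<Sum>k=1..n. M p k m * C k q)"

definition scal_mat :: "nat \<Rightarrow> (nat \<Rightarrow> nat \<Rightarrow> 'a::field) \<Rightarrow> (nat \<Rightarrow> nat \<Rightarrow> 'a)
    \<Rightarrow> nat \<Rightarrow> nat \<Rightarrow> 'a" where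
  "scal_mat n B C p q = (\<Sum>k=1..n. B p k * C k q)"

definition sigma :: "nat \<Rightarrow> (nat \<Rightarrow> 'a::field) \<Rightarrow> nat \<Rightarrow> 'a ps" where
  "sigma n x i = ps_det i (ps_mat_scal n (Zmat x) (Pmat x))"

definition tau :: "nat \<Rightarrow> (nat \<Rightarrow> 'a::field) \<Rightarrow> nat \<Rightarrow> 'a ps" where
  "tau n x i = ps_det i (ps_mat_scal n (Zmat x) (scal_mat n (Amat x) (Pmat x)))"

definition swp :: "nat \<Rightarrow> (nat \<Rightarrow> 'a) \<Rightarrow> nat \<Rightarrow> 'a" where
  "swp j x = x(j := x (Suc j), Suc j := x j)"

end

theory Submission
  imports Defs
begin


lemma finite_D: fixes m :: "nat \<Rightarrow>\<^sub>0 nat" shows "finite {(m1, m2). m1 + m2 = m}"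
proof -
  let ?S = "{m1::nat \<Rightarrow>\<^sub>0 nat. \<forall>k. Poly_Mapping.lookup m1 k \<le> Poly_Mapping.lookup m k}"
  let ?N = "\<Sum>k\<in>Poly_Mapping.keys m. Poly_Mapping.lookup m k"
  have "Poly_Mapping.lookup ` ?S \<subseteq> {f. \<forall>k. (k \<in> Poly_Mapping.keys m \<longrightarrow> f k \<in> {..?N}) \<and> (k \<notin> Poly_Mapping.keys m \<longrightarrow> f k = 0)}"
  proof clarsimp
    fix m1 k assume le: "\<forall>k. Poly_Mapping.lookup m1 k \<le> Poly_Mapping.lookup m k"
    show "(k \<in> Poly_Mapping.keys m \<longrightarrow> Poly_Mapping.lookup m1 k \<le> ?N) \<and> (k \<notin> Poly_Mapping.keys m \<longrightarrow> Poly_Mapping.lookup m1 k = 0)"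
    proof (intro conjI impI)
      assume "k \<in> Poly_Mapping.keys m"
      then have "Poly_Mapping.lookup m k \<le> ?N" by (intro member_le_sum) auto
      then show "Poly_Mapping.lookup m1 k \<le> ?N" using le order_trans by blast
    next
      assume "k \<notin> Poly_Mapping.keys m" then show "Poly_Mapping.lookup m1 k = 0" using le[rule_format, of k] by (simp add: in_keys_iff)
    qed
  qed
  moreover have "finite {f. \<forall>k. (k \<in> Poly_Mapping.keys m \<longrightarrow> f k \<in> {..?N}) \<and> (k \<notin> Poly_Mapping.keys m \<longrightarrow> f k = (0::nat))}"
    by (rule finite_set_of_finite_funs) auto
  ultimately have "finite (Poly_Mapping.lookup ` ?S)" by (rule finite_subset)
  then have fS: "finite ?S" by (rule finite_imageD) (auto intro: inj_onI simp: lookup_inject)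
  have "{(m1, m2). m1 + m2 = m} \<subseteq> (\<lambda>m1. (m1, m - m1)) ` ?S"
  proof
    fix z assume "z \<in> {(m1, m2). m1 + m2 = m}"
    then obtain m1 m2 where z: "z = (m1, m2)" and e: "m1 + m2 = m" by auto
    then have "m2 = m - m1" by auto
    moreover have "m1 \<in> ?S" using e by (auto simp: lookup_add)
    ultimately show "z \<in> (\<lambda>m1. (m1, m - m1)) ` ?S" unfolding z by (intro image_eqI[where x=m1]) simp_all
  qed
  then show ?thesis using finite_imageI[OF fS] by (rule finite_subset)
qed

lemma ps_mult_left_comm: "ps_mult a (ps_mult b c) = ps_mult b (ps_mult (a::'a::field ps) c)"
proof
  fix m
  let ?D = "\<lambda>m::nat \<Rightarrow>\<^sub>0 nat. {(m1, m2). m1 + m2 = m}"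
  have L: "ps_mult a (ps_mult b c) m' = (\<Sum>(p,q)\<in>Sigma (?D m') (\<lambda>p. ?D (snd p)). a (fst p) * (b (fst q) * c (snd q)))" for a b c m'
  proof -
    have "ps_mult a (ps_mult b c) m' = (\<Sum>p\<in>?D m'. \<Sum>q\<in>?D (snd p). a (fst p) * (b (fst q) * c (snd q)))"
      unfolding ps_mult_def by (simp add: sum_distrib_left case_prod_beta)
    also have "\<dots> = (\<Sum>(p,q)\<in>Sigma (?D m') (\<lambda>p. ?D (snd p)). a (fst p) * (b (fst q) * c (snd q)))"
      by (rule sum.Sigma) (auto intro: finite_D)
    finally show ?thesis .
  qed
  show "ps_mult a (ps_mult b c) m = ps_mult b (ps_mult a c) m"
    unfolding L
    by (rule sum.reindex_bij_witness[where i = "\<lambda>((m1,m2),(m3,m4)). ((m3, m1+m4),(m1,m4))"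
          and j = "\<lambda>((m1,m2),(m3,m4)). ((m3, m1+m4),(m1,m4))"])
       (auto simp: algebra_simps)
qed

lemma ps_mult_lin1: "ps_mult (\<lambda>m. u m + c * v m) g = (\<lambda>m. ps_mult u g m + c * ps_mult v g m)"
  unfolding ps_mult_def by (auto simp: sum.distrib sum_distrib_left algebra_simps case_prod_beta)

lemma ps_mult_lin2: "ps_mult g (\<lambda>m. u m + c * v m) = (\<lambda>m. ps_mult g u m + c * ps_mult g v m)"
  unfolding ps_mult_def by (auto simp: sum.distrib sum_distrib_left algebra_simps case_prod_beta)



lemma foldr_lin:
  fixes f :: "nat \<Rightarrow> 'a::field ps"
  assumes "b \<in> set xs" "distinct xs" "f b = (\<lambda>m. u m + c * v m)"
  shows "foldr ps_mult (map f xs) z = (\<lambda>m. foldr ps_mult (map (f(b:=u)) xs) z m + c * foldr ps_mult (map (f(b:=v)) xs) z m)"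
  using assms(1,2)
proof (induction xs)
  case Nil then show ?case by simp
next
  case (Cons a xs)
  show ?case
  proof (cases "a = b")
    case True
    with Cons.prems have "b \<notin> set xs" by auto
    then have e1: "map (f(b:=u)) xs = map f xs" and e2: "map (f(b:=v)) xs = map f xs" by auto
    show ?thesis using True by (simp add: e1 e2 assms(3) ps_mult_lin1 fun_upd_same del: fun_upd_apply)
  next
    case False
    with Cons.prems have "b \<in> set xs" "distinct xs" by auto
    from Cons.IH[OF this] show ?thesis using False by (simp add: ps_mult_lin2)
  qed
qed

lemma foldr_swap:
  "foldr ps_mult (xs @ u # v # ys) (z::'a::field ps) = foldr ps_mult (xs @ v # u # ys) z"
  by (induction xs) (simp_all add: ps_mult_left_comm)

lemma upt_split2:
  assumes "1 \<le> a" "Suc a \<le> k"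
  shows "[1..<Suc k] = [1..<a] @ a # Suc a # [Suc (Suc a)..<Suc k]"
proof -
  have "[1..<Suc k] = [1..<a] @ [a..<Suc k]" using assms upt_add_eq_append[of 1 a "Suc k - a"] by simp
  also have "[a..<Suc k] = a # Suc a # [Suc (Suc a)..<Suc k]" using assms by (simp add: upt_conv_Cons)
  finally show ?thesis .
qed

lemma ps_det_equal_rows:
  fixes N :: "nat \<Rightarrow> nat \<Rightarrow> 'a::field ps"
  assumes "1 \<le> a" "Suc a \<le> k" "N (Suc a) = N a"
  shows "ps_det k N = (\<lambda>m. 0)"
proof
  fix m
  define T where "T \<pi> = foldr ps_mult (map (\<lambda>r. N r (\<pi> r)) [1..<Suc k]) ps_one m" for \<pi>
  define \<tau> where "\<tau> = Transposition.transpose a (Suc a)"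
  let ?P = "{\<pi>. \<pi> permutes {1..k}}"
  have fin: "finite ?P" by (simp add: finite_permutations)
  have tauP: "\<tau> permutes {1..k}" unfolding \<tau>_def using assms by (intro permutes_swap_id) auto
  have tfix: "r \<noteq> a \<Longrightarrow> r \<noteq> Suc a \<Longrightarrow> \<tau> r = r" for r unfolding \<tau>_def by simp
  have Tt: "T (\<pi> \<circ> \<tau>) = T \<pi>" for \<pi>
  proof -
    have m1: "map (\<lambda>r. N r ((\<pi> \<circ> \<tau>) r)) [1..<a] = map (\<lambda>r. N r (\<pi> r)) [1..<a]"
      proof (rule map_cong[OF refl])
      fix r assume "r \<in> set [1..<a]"
      then have "\<tau> r = r" by (intro tfix) auto
      then show "N r ((\<pi> \<circ> \<tau>) r) = N r (\<pi> r)" by simp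
    qed
    have m2: "map (\<lambda>r. N r ((\<pi> \<circ> \<tau>) r)) [Suc (Suc a)..<Suc k] = map (\<lambda>r. N r (\<pi> r)) [Suc (Suc a)..<Suc k]"
      proof (rule map_cong[OF refl])
      fix r assume "r \<in> set [Suc (Suc a)..<Suc k]"
      then have "\<tau> r = r" by (intro tfix) auto
      then show "N r ((\<pi> \<circ> \<tau>) r) = N r (\<pi> r)" by simp
    qed
    have t1: "\<tau> a = Suc a" "\<tau> (Suc a) = a" unfolding \<tau>_def by auto
    have "map (\<lambda>r. N r ((\<pi> \<circ> \<tau>) r)) [1..<Suc k] = map (\<lambda>r. N r (\<pi> r)) [1..<a] @ N a (\<pi> (Suc a)) # N a (\<pi> a) # map (\<lambda>r. N r (\<pi> r)) [Suc (Suc a)..<Suc k]"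
      unfolding upt_split2[OF assms(1,2)] map_append list.map m1 m2 by (simp add: t1 assms(3))
    moreover have "map (\<lambda>r. N r (\<pi> r)) [1..<Suc k] = map (\<lambda>r. N r (\<pi> r)) [1..<a] @ N a (\<pi> a) # N a (\<pi> (Suc a)) # map (\<lambda>r. N r (\<pi> r)) [Suc (Suc a)..<Suc k]"
      unfolding upt_split2[OF assms(1,2)] map_append by (simp add: assms(3))
    ultimately show ?thesis unfolding T_def by (simp only: foldr_swap)
  qed
  have ev: "evenperm (\<pi> \<circ> \<tau>) = (\<not> evenperm \<pi>)" if "\<pi> permutes {1..k}" for \<pi>
  proof -
    have "permutation \<pi>" "permutation \<tau>" using that tauP by (auto intro: permutes_imp_permutation)
    then have "evenperm (\<pi> \<circ> \<tau>) = (evenperm \<pi> = evenperm \<tau>)" by (rule evenperm_comp)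
    moreover have "\<not> evenperm \<tau>" unfolding \<tau>_def by (simp add: evenperm_swap)
    ultimately show ?thesis by simp
  qed
  have "ps_det k N m = (\<Sum>\<pi>\<in>?P. of_int (sign \<pi>) * T \<pi>)" unfolding ps_det_def T_def by simp
  also have "\<dots> = (\<Sum>\<pi>\<in>{\<pi>\<in>?P. evenperm \<pi>}. of_int (sign \<pi>) * T \<pi>) + (\<Sum>\<pi>\<in>{\<pi>\<in>?P. \<not> evenperm \<pi>}. of_int (sign \<pi>) * T \<pi>)"
  proof -
    have eq: "{\<pi>\<in>?P. evenperm \<pi>} \<union> {\<pi>\<in>?P. \<not> evenperm \<pi>} = ?P" by blast
    have "(\<Sum>\<pi>\<in>{\<pi>\<in>?P. evenperm \<pi>} \<union> {\<pi>\<in>?P. \<not> evenperm \<pi>}. of_int (sign \<pi>) * T \<pi>) = (\<Sum>\<pi>\<in>{\<pi>\<in>?P. evenperm \<pi>}. of_int (sign \<pi>) * T \<pi>) + (\<Sum>\<pi>\<in>{\<pi>\<in>?P. \<not> evenperm \<pi>}. of_int (sign \<pi>) * T \<pi>)"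
      by (rule sum.union_disjoint) (use fin in auto)
    then show ?thesis unfolding eq .
  qed
  also have "(\<Sum>\<pi>\<in>{\<pi>\<in>?P. evenperm \<pi>}. of_int (sign \<pi>) * T \<pi>) = (\<Sum>\<pi>\<in>{\<pi>\<in>?P. evenperm \<pi>}. T \<pi>)"
    by (rule sum.cong) (simp_all add: sign_def)
  also have "(\<Sum>\<pi>\<in>{\<pi>\<in>?P. \<not> evenperm \<pi>}. of_int (sign \<pi>) * T \<pi>) = - (\<Sum>\<pi>\<in>{\<pi>\<in>?P. \<not> evenperm \<pi>}. T \<pi>)"
    by (simp add: sum_negf[symmetric] sign_def)
  also have "(\<Sum>\<pi>\<in>{\<pi>\<in>?P. \<not> evenperm \<pi>}. T \<pi>) = (\<Sum>\<pi>\<in>{\<pi>\<in>?P. evenperm \<pi>}. T \<pi>)"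
  proof (rule sum.reindex_bij_witness[where i = "\<lambda>\<pi>. \<pi> \<circ> \<tau>" and j = "\<lambda>\<pi>. \<pi> \<circ> \<tau>"])
    have inv: "\<pi> \<circ> \<tau> \<circ> \<tau> = \<pi>" for \<pi> unfolding \<tau>_def by (simp add: comp_assoc)
    show "\<pi> \<circ> \<tau> \<circ> \<tau> = \<pi>" for \<pi> by (rule inv)
    show "\<pi> \<circ> \<tau> \<circ> \<tau> = \<pi>" for \<pi> by (rule inv)
    show "\<pi> \<circ> \<tau> \<in> {\<pi>\<in>?P. \<not> evenperm \<pi>}" if "\<pi> \<in> {\<pi>\<in>?P. evenperm \<pi>}" for \<pi>
      using that ev permutes_compose[OF tauP] by auto
    show "\<pi> \<circ> \<tau> \<in> {\<pi>\<in>?P. evenperm \<pi>}" if "\<pi> \<in> {\<pi>\<in>?P. \<not> evenperm \<pi>}" for \<pi>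
      using that ev permutes_compose[OF tauP] by auto
    show "T (\<pi> \<circ> \<tau>) = T \<pi>" for \<pi> by (rule Tt)
  qed
  finally show "ps_det k N m = 0" by simp
qed



definition DD :: "('a \<Rightarrow> 'a) \<Rightarrow> (nat \<Rightarrow> 'a::field) \<Rightarrow> nat set \<Rightarrow> 'a" where
  "DD g x S = (\<Sum>k\<in>S. g (x k) / (\<Prod>l\<in>S-{k}. (x k - x l)))"

lemma gen_frac: "G / (A * (B * Q)) * (B - A) = G / (A * Q) - G / (B * (Q::'a::field))" if "A \<noteq> 0" "B \<noteq> 0" "Q \<noteq> 0"
  using that by (simp add: field_simps)

lemma DD_key:
  fixes x :: "nat \<Rightarrow> 'a::field"
  assumes fin: "finite T" and aT: "a \<notin> T" and bT: "b \<notin> T" and ab: "a \<noteq> b"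
    and inj: "inj_on x (insert a (insert b T))"
  shows "DD g x (insert a (insert b T)) * (x a - x b) = DD g x (insert a T) - DD g x (insert b T)"
proof -
  define P where "P k = (\<Prod>l\<in>T-{k}. (x k - x l))" for k
  have xab: "x a \<noteq> x b" using inj ab by (auto dest: inj_onD)
  have xka: "x k \<noteq> x a" if "k \<in> T" for k
  proof
    assume "x k = x a"
    then have "k = a" by (rule inj_onD[OF inj]) (use that in auto)
    then show False using that aT by simp
  qed
  have xkb: "x k \<noteq> x b" if "k \<in> T" for k
  proof
    assume "x k = x b"
    then have "k = b" by (rule inj_onD[OF inj]) (use that in auto)
    then show False using that bT by simp
  qed
  have Pnz: "P k \<noteq> 0" if "k \<in> insert a (insert b T)" for k
    unfolding P_def using fin inj that by (auto simp: prod_zero_iff dest: inj_onD)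
  have PaT: "(\<Prod>l\<in>T. (x a - x l)) = P a" unfolding P_def using aT by simp
  have PbT: "(\<Prod>l\<in>T. (x b - x l)) = P b" unfolding P_def using bT by simp
  have U_a: "insert a (insert b T) - {a} = insert b T" using aT ab by auto
  have U_b: "insert a (insert b T) - {b} = insert a T" using bT ab by auto
  have U_k: "insert a (insert b T) - {k} = insert a (insert b (T - {k}))" if "k \<in> T" for k
    using that aT bT by auto
  have A_k: "insert a T - {k} = insert a (T - {k})" if "k \<in> T" for k using that aT by auto
  have B_k: "insert b T - {k} = insert b (T - {k})" if "k \<in> T" for k using that bT by auto
  have sU: "sum h (insert a (insert b T)) = h a + (h b + sum h T)" for h :: "nat \<Rightarrow> 'a" using fin aT bT ab by simp
  have sA: "sum h (insert a T) = h a + sum h T" for h :: "nat \<Rightarrow> 'a" using fin aT by simp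
  have sB: "sum h (insert b T) = h b + sum h T" for h :: "nat \<Rightarrow> 'a" using fin bT by simp
  have dU: "DD g x (insert a (insert b T)) =
      g (x a) / ((x a - x b) * P a) + g (x b) / ((x b - x a) * P b)
      + (\<Sum>k\<in>T. g (x k) / ((x k - x a) * ((x k - x b) * P k)))"
  proof -
    have "DD g x (insert a (insert b T)) = g (x a) / (\<Prod>l\<in>insert b T. (x a - x l))
       + (g (x b) / (\<Prod>l\<in>insert a T. (x b - x l))
       + (\<Sum>k\<in>T. g (x k) / (\<Prod>l\<in>insert a (insert b (T - {k})). (x k - x l))))"
      unfolding DD_def sU U_a U_b using sum.cong[OF refl, of T "\<lambda>k. g (x k) / (\<Prod>l\<in>insert a (insert b T) - {k}. (x k - x l))" "\<lambda>k. g (x k) / (\<Prod>l\<in>insert a (insert b (T - {k})). (x k - x l))"] U_k by simp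
    also have "\<dots> = g (x a) / ((x a - x b) * P a) + (g (x b) / ((x b - x a) * P b)
       + (\<Sum>k\<in>T. g (x k) / ((x k - x a) * ((x k - x b) * P k))))"
    proof -
      have "(\<Prod>l\<in>insert b T. (x a - x l)) = (x a - x b) * P a" using fin bT PaT by simp
      moreover have "(\<Prod>l\<in>insert a T. (x b - x l)) = (x b - x a) * P b" using fin aT PbT by simp
      moreover have "(\<Prod>l\<in>insert a (insert b (T - {k})). (x k - x l)) = (x k - x a) * ((x k - x b) * P k)" if "k \<in> T" for k
        unfolding P_def using fin aT bT ab by simp
      ultimately show ?thesis by simp
    qed
    finally show ?thesis by (simp add: add.assoc)
  qed
  have dA: "DD g x (insert a T) = g (x a) / P a + (\<Sum>k\<in>T. g (x k) / ((x k - x a) * P k))"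
  proof -
    have "DD g x (insert a T) = g (x a) / (\<Prod>l\<in>T. (x a - x l))
       + (\<Sum>k\<in>T. g (x k) / (\<Prod>l\<in>insert a (T - {k}). (x k - x l)))"
      unfolding DD_def sA using sum.cong[OF refl, of T "\<lambda>k. g (x k) / (\<Prod>l\<in>insert a T - {k}. (x k - x l))" "\<lambda>k. g (x k) / (\<Prod>l\<in>insert a (T - {k}). (x k - x l))"] A_k aT by simp
    also have "\<dots> = g (x a) / P a + (\<Sum>k\<in>T. g (x k) / ((x k - x a) * P k))"
    proof -
      have "(\<Prod>l\<in>insert a (T - {k}). (x k - x l)) = (x k - x a) * P k" if "k \<in> T" for k
        unfolding P_def using fin aT by simp
      then show ?thesis using PaT by simp
    qed
    finally show ?thesis .
  qed
  have dB: "DD g x (insert b T) = g (x b) / P b + (\<Sum>k\<in>T. g (x k) / ((x k - x b) * P k))"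
  proof -
    have "DD g x (insert b T) = g (x b) / (\<Prod>l\<in>T. (x b - x l))
       + (\<Sum>k\<in>T. g (x k) / (\<Prod>l\<in>insert b (T - {k}). (x k - x l)))"
      unfolding DD_def sB using sum.cong[OF refl, of T "\<lambda>k. g (x k) / (\<Prod>l\<in>insert b T - {k}. (x k - x l))" "\<lambda>k. g (x k) / (\<Prod>l\<in>insert b (T - {k}). (x k - x l))"] B_k bT by simp
    also have "\<dots> = g (x b) / P b + (\<Sum>k\<in>T. g (x k) / ((x k - x b) * P k))"
    proof -
      have "(\<Prod>l\<in>insert b (T - {k}). (x k - x l)) = (x k - x b) * P k" if "k \<in> T" for k
        unfolding P_def using fin bT by simp
      then show ?thesis using PbT by simp
    qed
    finally show ?thesis .
  qed
  have t1: "g (x a) / ((x a - x b) * P a) * (x a - x b) = g (x a) / P a"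
    using xab Pnz[of a] by (simp add: field_simps)
  have t2: "g (x b) / ((x b - x a) * P b) * (x a - x b) = - (g (x b) / P b)"
    using xab Pnz[of b] by (simp add: field_simps)
  have t3: "g (x k) / ((x k - x a) * ((x k - x b) * P k)) * (x a - x b) =
      g (x k) / ((x k - x a) * P k) - g (x k) / ((x k - x b) * P k)" if "k \<in> T" for k
  proof -
    have "x a - x b = (x k - x b) - (x k - x a)" by simp
    then show ?thesis using gen_frac[of "x k - x a" "x k - x b" "P k" "g (x k)"] xka[OF that] xkb[OF that] Pnz[of k] that by simp
  qed
  have "DD g x (insert a (insert b T)) * (x a - x b) =
     g (x a) / P a - g (x b) / P b + (\<Sum>k\<in>T. g (x k) / ((x k - x a) * P k) - g (x k) / ((x k - x b) * P k))"
    unfolding dU distrib_right sum_distrib_right t1 t2 using t3 by simp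
  also have "\<dots> = DD g x (insert a T) - DD g x (insert b T)"
    unfolding dA dB sum_subtractf by simp
  finally show ?thesis .
qed



abbreviation gm :: "(nat \<Rightarrow>\<^sub>0 nat) \<Rightarrow> 'a::field \<Rightarrow> 'a" where
  "gm m \<equiv> (\<lambda>t. (1 - t) ^ mono_deg m)"

lemma DD_single: "DD g x {p} = g (x p)"
  unfolding DD_def by simp

lemma zz_DD:
  fixes x :: "nat \<Rightarrow> 'a::field"
  assumes "inj_on x {p..p+d}"
  shows "zz x d p m = (-1)^d * DD (gm m) x {p..p+d}"
  using assms
proof (induction d arbitrary: p)
  case 0
  then show ?case by (simp add: DD_single Omega_def)
next
  case (Suc d)
  have i1: "inj_on x {p..p+d}" using Suc.prems by (rule inj_on_subset) auto
  have i2: "inj_on x {Suc p..Suc p+d}" using Suc.prems by (rule inj_on_subset) auto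
  let ?T = "{Suc p..p+d}"
  have U: "insert p (insert (p + Suc d) ?T) = {p..p + Suc d}" by auto
  have A: "insert p ?T = {p..p+d}" by auto
  have B: "insert (p + Suc d) ?T = {Suc p..Suc p+d}" by auto
  have key: "DD (gm m) x {p..p + Suc d} * (x p - x (p + Suc d)) = DD (gm m) x {p..p+d} - DD (gm m) x {Suc p..Suc p+d}"
  proof -
    have inj': "inj_on x (insert p (insert (p+Suc d) ?T))" unfolding U by (rule Suc.prems)
    have "DD (gm m) x (insert p (insert (p + Suc d) ?T)) * (x p - x (p + Suc d)) = DD (gm m) x (insert p ?T) - DD (gm m) x (insert (p + Suc d) ?T)"
      by (rule DD_key[OF _ _ _ _ inj']) auto
    then show ?thesis unfolding U unfolding A B .
  qed
  have ne: "x (p + Suc d) - x p \<noteq> 0"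
  proof
    assume "x (p + Suc d) - x p = 0"
    then have "p + Suc d = p" using Suc.prems by (intro inj_onD[OF Suc.prems]) auto
    then show False by simp
  qed
  have "zz x (Suc d) p m = (zz x d p m - zz x d (Suc p) m) / (x (p + Suc d) - x p)" by simp
  also have "\<dots> = (-1)^d * (DD (gm m) x {p..p+d} - DD (gm m) x {Suc p..Suc p+d}) / (x (p + Suc d) - x p)"
    using Suc.IH[OF i1] Suc.IH[OF i2] by (simp add: right_diff_distrib)
  also have "\<dots> = (-1)^d * (DD (gm m) x {p..p + Suc d} * (x p - x (p + Suc d))) / (x (p + Suc d) - x p)"
    by (simp only: key)
  also have "\<dots> = (-1)^(Suc d) * DD (gm m) x {p..p + Suc d}"
  proof -
    have "x p - x (p + Suc d) = - (x (p + Suc d) - x p)" by simp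
    then show ?thesis using ne by (simp add: field_simps)
  qed
  finally show ?case .
qed

lemma Zmat_DD:
  fixes x :: "nat \<Rightarrow> 'a::field"
  assumes "inj_on x {p..q}"
  shows "Zmat x p q m = (if p \<le> q then (-1)^(q-p) * DD (gm m) x {p..q} else 0)"
  using zz_DD[of x p "q - p" m] assms unfolding Zmat_def by auto

lemma DD_comp:
  fixes x :: "nat \<Rightarrow> 'a::field"
  assumes "inj \<sigma>"
  shows "DD g (x \<circ> \<sigma>) S = DD g x (\<sigma> ` S)"
proof -
  have "DD g x (\<sigma> ` S) = (\<Sum>k\<in>S. g (x (\<sigma> k)) / (\<Prod>l\<in>\<sigma> ` S - {\<sigma> k}. (x (\<sigma> k) - x l)))"
    unfolding DD_def by (subst sum.reindex) (use assms in \<open>auto intro: inj_on_subset\<close>)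
  also have "\<dots> = (\<Sum>k\<in>S. g (x (\<sigma> k)) / (\<Prod>l\<in>S - {k}. (x (\<sigma> k) - x (\<sigma> l))))"
  proof (rule sum.cong[OF refl])
    fix k assume "k \<in> S"
    have "\<sigma> ` S - {\<sigma> k} = \<sigma> ` (S - {k})" using assms by (auto dest: injD)
    then have "(\<Prod>l\<in>\<sigma> ` S - {\<sigma> k}. (x (\<sigma> k) - x l)) = (\<Prod>l\<in>S - {k}. (x (\<sigma> k) - x (\<sigma> l)))"
      by (simp add: prod.reindex inj_on_subset[OF assms])
    then show "g (x (\<sigma> k)) / (\<Prod>l\<in>\<sigma> ` S - {\<sigma> k}. (x (\<sigma> k) - x l)) = g (x (\<sigma> k)) / (\<Prod>l\<in>S - {k}. (x (\<sigma> k) - x (\<sigma> l)))" by simp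
  qed
  finally show ?thesis unfolding DD_def by simp
qed

lemma swp_comp: "swp j x = x \<circ> Transposition.transpose j (Suc j)"
  unfolding swp_def by (auto simp: transpose_def)

lemma transpose_image_same:
  assumes "(j \<in> S) = (Suc j \<in> S)"
  shows "Transposition.transpose j (Suc j) ` S = S"
proof -
  have sub: "Transposition.transpose j (Suc j) ` S \<subseteq> S"
    if "(j \<in> S) = (Suc j \<in> S)" for S :: "nat set"
    using that by (auto simp: transpose_def)
  have "S = Transposition.transpose j (Suc j) ` (Transposition.transpose j (Suc j) ` S)"
    by (simp add: image_comp)
  also have "\<dots> \<subseteq> Transposition.transpose j (Suc j) ` S" using sub[OF assms] by blast
  finally show ?thesis using sub[OF assms] by blast
qed



lemma ZS:
  fixes x :: "nat \<Rightarrow> 'a::field"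
  assumes inj: "inj_on x {1..n}" and j: "1 \<le> j" "Suc j \<le> n"
    and p: "1 \<le> p" "p \<le> n" and q: "1 \<le> q" "q \<le> n"
  shows "Zmat (swp j x) p q m + (if q = j then (x (Suc j) - x j) * Zmat (swp j x) p (Suc j) m else 0)
       = Zmat x p q m + (if p = Suc j then (x (Suc j) - x j) * Zmat x j q m else 0)"
proof -
  define \<sigma> where "\<sigma> = Transposition.transpose j (Suc j)"
  define \<delta> where "\<delta> = x (Suc j) - x j"
  have injS: "inj_on x S" if "S \<subseteq> {1..n}" for S using inj that by (rule inj_on_subset)
  have s1n: "\<sigma> ` {1..n} = {1..n}" unfolding \<sigma>_def using j by (intro transpose_image_same) auto
  have injs: "inj \<sigma>" unfolding \<sigma>_def by simp
  have Z: "Zmat x p' q' m = (if p' \<le> q' then (-1)^(q'-p') * DD (gm m) x {p'..q'} else 0)"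
    if "1 \<le> p'" "q' \<le> n" for p' q'
    by (rule Zmat_DD, rule injS) (use that in auto)
  have Z': "Zmat (swp j x) p' q' m = (if p' \<le> q' then (-1)^(q'-p') * DD (gm m) x (\<sigma> ` {p'..q'}) else 0)"
    if "1 \<le> p'" "q' \<le> n" for p' q'
  proof -
    have sub: "{p'..q'} \<subseteq> {1..n}" using that by auto
    have "inj_on (x \<circ> \<sigma>) {p'..q'}"
    proof (rule comp_inj_on)
      show "inj_on \<sigma> {p'..q'}" using injs by (rule inj_on_subset) simp
      have "\<sigma> ` {p'..q'} \<subseteq> {1..n}" using sub s1n by blast
      then show "inj_on x (\<sigma> ` {p'..q'})" by (rule injS)
    qed
    then show ?thesis unfolding swp_comp \<sigma>_def[symmetric] using Zmat_DD[of "x \<circ> \<sigma>" p' q' m] by (simp add: DD_comp[OF injs])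
  qed
  have key: "DD (gm m) x (insert (Suc j) (insert j T)) * \<delta> = DD (gm m) x (insert (Suc j) T) - DD (gm m) x (insert j T)"
    if "T \<subseteq> {1..n}" "j \<notin> T" "Suc j \<notin> T" "finite T" for T
  proof -
    have "inj_on x (insert (Suc j) (insert j T))" by (rule injS) (use that j in auto)
    from DD_key[OF that(4) that(3) that(2) _ this] show ?thesis unfolding \<delta>_def by simp
  qed
  have \<sigma>j: "\<sigma> j = Suc j" "\<sigma> (Suc j) = j" unfolding \<sigma>_def by auto
  have \<sigma>T: "\<sigma> ` T = T" if "j \<notin> T" "Suc j \<notin> T" for T unfolding \<sigma>_def using that by (intro transpose_image_same) auto
  have "Zmat (swp j x) p q m + (if q = j then \<delta> * Zmat (swp j x) p (Suc j) m else 0)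
       = Zmat x p q m + (if p = Suc j then \<delta> * Zmat x j q m else 0)"
  proof (cases "q = j")
    case qj: True
    show ?thesis
    proof (cases "p = Suc j")
      case True
      have "\<sigma> ` {Suc j..Suc j} = {j}" using \<sigma>j by simp
      then show ?thesis using qj True Z'[of "Suc j" j] Z'[of "Suc j" "Suc j"] Z[of "Suc j" j] Z[of j j] j
        by simp
    next
      case pn: False
      show ?thesis
      proof (cases "p \<le> j")
        case True
        define T where "T = {p..<j}"
        have e1: "{p..j} = insert j T" using True unfolding T_def by auto
        have e2: "{p..Suc j} = insert (Suc j) (insert j T)" using True unfolding T_def by auto
        have e3: "\<sigma> ` {p..j} = insert (Suc j) T" unfolding e1 using \<sigma>j \<sigma>T[of T] by (simp add: T_def)
        have K: "DD (gm m) x (insert (Suc j) (insert j T)) * \<delta> = DD (gm m) x (insert (Suc j) T) - DD (gm m) x (insert j T)"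
          by (rule key) (use j p in \<open>auto simp: T_def\<close>)
        have sg: "(-1::'a)^(Suc j - p) = - ((-1)^(j - p))" using True by (simp add: Suc_diff_le)
        have e4: "\<sigma> ` {p..Suc j} = insert (Suc j) (insert j T)" unfolding e2 using \<sigma>j \<sigma>T[of T] by (auto simp: T_def)
        have v1: "Zmat (swp j x) p j m = (-1)^(j-p) * DD (gm m) x (insert (Suc j) T)"
          using Z'[of p j] True j p e3 by simp
        have v2: "Zmat (swp j x) p (Suc j) m = - ((-1)^(j-p) * DD (gm m) x (insert (Suc j) (insert j T)))"
          using Z'[of p "Suc j"] True j p e4 sg by simp
        have v3: "Zmat x p j m = (-1)^(j-p) * DD (gm m) x (insert j T)"
          using Z[of p j] True j p e1 by simp
        have K': "\<delta> * DD (gm m) x (insert (Suc j) (insert j T)) = DD (gm m) x (insert (Suc j) T) - DD (gm m) x (insert j T)"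
          using K by (simp add: mult.commute)
        have "(-1)^(j-p) * DD (gm m) x (insert (Suc j) T) + \<delta> * (- ((-1)^(j-p) * DD (gm m) x (insert (Suc j) (insert j T))))
            = (-1)^(j-p) * DD (gm m) x (insert (Suc j) T) - (-1)^(j-p) * (\<delta> * DD (gm m) x (insert (Suc j) (insert j T)))"
          by (simp add: algebra_simps)
        also have "\<dots> = (-1)^(j-p) * DD (gm m) x (insert j T)" unfolding K' by (simp add: algebra_simps)
        finally show ?thesis using pn unfolding qj by (simp add: v1 v2 v3)
      next
        case False
        then show ?thesis using qj pn Z'[of p j] Z'[of p "Suc j"] Z[of p j] j p by simp
      qed
    qed
  next
    case qn: False
    show ?thesis
    proof (cases "p = Suc j")
      case pj: True
      show ?thesis
      proof (cases "Suc j \<le> q")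
        case True
        define T where "T = {Suc (Suc j)..q}"
        have e1: "{Suc j..q} = insert (Suc j) T" using True unfolding T_def by auto
        have e2: "{j..q} = insert (Suc j) (insert j T)" using True unfolding T_def by auto
        have e3: "\<sigma> ` {Suc j..q} = insert j T" unfolding e1 using \<sigma>j \<sigma>T[of T] by (simp add: T_def)
        have K: "DD (gm m) x (insert (Suc j) (insert j T)) * \<delta> = DD (gm m) x (insert (Suc j) T) - DD (gm m) x (insert j T)"
          by (rule key) (use j q in \<open>auto simp: T_def\<close>)
        have sg: "(-1::'a)^(q - j) = - ((-1)^(q - Suc j))"
        proof -
          have "q - j = Suc (q - Suc j)" using True by simp
          then show ?thesis by simp
        qed
        have v1: "Zmat (swp j x) (Suc j) q m = (-1)^(q - Suc j) * DD (gm m) x (insert j T)"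
          using Z'[of "Suc j" q] True j q e3 by simp
        have v2: "Zmat x (Suc j) q m = (-1)^(q - Suc j) * DD (gm m) x (insert (Suc j) T)"
          using Z[of "Suc j" q] True j q e1 by simp
        have v3: "Zmat x j q m = - ((-1)^(q - Suc j) * DD (gm m) x (insert (Suc j) (insert j T)))"
          using Z[of j q] True j q e2 sg by simp
        have K': "\<delta> * DD (gm m) x (insert (Suc j) (insert j T)) = DD (gm m) x (insert (Suc j) T) - DD (gm m) x (insert j T)"
          using K by (simp add: mult.commute)
        have "(-1)^(q - Suc j) * DD (gm m) x (insert (Suc j) T) + \<delta> * (- ((-1)^(q - Suc j) * DD (gm m) x (insert (Suc j) (insert j T))))
            = (-1)^(q - Suc j) * DD (gm m) x (insert (Suc j) T) - (-1)^(q - Suc j) * (\<delta> * DD (gm m) x (insert (Suc j) (insert j T)))"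
          by (simp add: algebra_simps)
        also have "\<dots> = (-1)^(q - Suc j) * DD (gm m) x (insert j T)" unfolding K' by (simp add: algebra_simps)
        finally show ?thesis using qn unfolding pj by (simp add: v1 v2 v3)
      next
        case False
        then show ?thesis using qn pj Z'[of "Suc j" q] Z[of "Suc j" q] Z[of j q] j q by simp
      qed
    next
      case pn: False
      show ?thesis
      proof (cases "p \<le> q")
        case True
        have "\<sigma> ` {p..q} = {p..q}" unfolding \<sigma>_def using qn pn by (intro transpose_image_same) auto
        then show ?thesis using qn pn Z'[of p q] Z[of p q] p q by simp
      next
        case False
        then show ?thesis using qn pn Z'[of p q] Z[of p q] p q by simp
      qed
    qed
  qed
  then show ?thesis unfolding \<delta>_def .
qed



lemma ps_det_cong:
  assumes "\<forall>p\<in>{1..k}. \<forall>q\<in>{1..k}. M p q = N p q"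
  shows "ps_det k M = ps_det k N"
  unfolding ps_det_def
proof (rule ext, rule sum.cong[OF refl])
  fix m \<pi> assume "\<pi> \<in> {\<pi>. \<pi> permutes {1..k}}"
  then have pp: "\<pi> permutes {1..k}" by simp
  have eqm: "map (\<lambda>r. M r (\<pi> r)) [1..<Suc k] = map (\<lambda>r. N r (\<pi> r)) [1..<Suc k]"
  proof (rule map_cong[OF refl])
    fix r assume "r \<in> set [1..<Suc k]"
    then have r: "r \<in> {1..k}" by auto
    then have "\<pi> r \<in> {1..k}" using permutes_in_image[OF pp, of r] by blast
    then show "M r (\<pi> r) = N r (\<pi> r)" using assms r by blast
  qed
  show "of_int (sign \<pi>) * foldr ps_mult (map (\<lambda>r. M r (\<pi> r)) [1..<Suc k]) ps_one m =
         of_int (sign \<pi>) * foldr ps_mult (map (\<lambda>r. N r (\<pi> r)) [1..<Suc k]) ps_one m" unfolding eqm by (rule refl)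
qed

lemma ps_det_rowop:
  fixes M :: "nat \<Rightarrow> nat \<Rightarrow> 'a::field ps"
  assumes a: "1 \<le> a" "Suc a \<le> k"
  shows "ps_det k (\<lambda>r. if r = Suc a then (\<lambda>q m. M (Suc a) q m + c * M a q m) else M r) = ps_det k M"
proof
  fix m
  define M' where "M' = (\<lambda>r. if r = Suc a then (\<lambda>q m. M (Suc a) q m + c * M a q m) else M r)"
  define N where "N = M(Suc a := M a)"
  have T: "foldr ps_mult (map (\<lambda>r. M' r (\<pi> r)) [1..<Suc k]) ps_one m =
      foldr ps_mult (map (\<lambda>r. M r (\<pi> r)) [1..<Suc k]) ps_one m + c * foldr ps_mult (map (\<lambda>r. N r (\<pi> r)) [1..<Suc k]) ps_one m" for \<pi>
  proof -
    let ?f = "\<lambda>r. M' r (\<pi> r)"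
    have fb: "?f (Suc a) = (\<lambda>m. M (Suc a) (\<pi> (Suc a)) m + c * M a (\<pi> (Suc a)) m)" unfolding M'_def by simp
    have mem: "Suc a \<in> set [1..<Suc k]" using a by auto
    have e1: "?f(Suc a := M (Suc a) (\<pi> (Suc a))) = (\<lambda>r. M r (\<pi> r))" unfolding M'_def by auto
    have e2: "?f(Suc a := M a (\<pi> (Suc a))) = (\<lambda>r. N r (\<pi> r))" unfolding M'_def N_def by auto
    show ?thesis using foldr_lin[where f = ?f and b = "Suc a" and xs = "[1..<Suc k]" and u = "M (Suc a) (\<pi> (Suc a))" and c = c and v = "M a (\<pi> (Suc a))" and z = ps_one, OF mem distinct_upt fb] unfolding e1 e2 by simp
  qed
  have "ps_det k M' m = (\<Sum>\<pi>\<in>{\<pi>. \<pi> permutes {1..k}}. of_int (sign \<pi>) * foldr ps_mult (map (\<lambda>r. M r (\<pi> r)) [1..<Suc k]) ps_one m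
       + c * (of_int (sign \<pi>) * foldr ps_mult (map (\<lambda>r. N r (\<pi> r)) [1..<Suc k]) ps_one m))"
    unfolding ps_det_def T by (simp add: algebra_simps)
  also have "\<dots> = ps_det k M m + c * ps_det k N m"
    unfolding ps_det_def by (simp add: sum.distrib sum_distrib_left)
  also have "ps_det k N m = 0" using ps_det_equal_rows[OF a, of N] unfolding N_def by simp
  finally show "ps_det k M' m = ps_det k M m" by simp
qed

lemma rowop_prod:
  fixes C C' B B' :: "nat \<Rightarrow> nat \<Rightarrow> 'a::field"
  assumes j: "1 \<le> j" "Suc j \<le> n"
    and hB: "\<forall>k\<in>{1..n}. B' k q = B k q + (if k = Suc j then \<delta> * B j q else 0)"
    and hC: "\<forall>k\<in>{1..n}. C' p k + (if k = j then \<delta> * C' p (Suc j) else 0) = C p k + (if p = Suc j then \<delta> * C j k else 0)"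
  shows "(\<Sum>k=1..n. C' p k * B' k q) = (\<Sum>k=1..n. C p k * B k q) + (if p = Suc j then \<delta> * (\<Sum>k=1..n. C j k * B k q) else 0)"
proof -
  have "(\<Sum>k=1..n. C' p k * B' k q) = (\<Sum>k=1..n. C' p k * B k q + (if k = Suc j then C' p k * (\<delta> * B j q) else 0))"
    using hB by (intro sum.cong) (auto simp: algebra_simps)
  also have "\<dots> = (\<Sum>k=1..n. C' p k * B k q) + C' p (Suc j) * (\<delta> * B j q)"
    using j by (simp add: sum.distrib)
  also have "\<dots> = (\<Sum>k=1..n. (C' p k + (if k = j then \<delta> * C' p (Suc j) else 0)) * B k q)"
  proof -
    have "(\<Sum>k=1..n. (C' p k + (if k = j then \<delta> * C' p (Suc j) else 0)) * B k q) = (\<Sum>k=1..n. C' p k * B k q + (if k = j then C' p (Suc j) * (\<delta> * B j q) else 0))"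
      by (rule sum.cong) (auto simp: algebra_simps)
    also have "\<dots> = (\<Sum>k=1..n. C' p k * B k q) + C' p (Suc j) * (\<delta> * B j q)"
      using j by (simp add: sum.distrib)
    finally show ?thesis by simp
  qed
  also have "\<dots> = (\<Sum>k=1..n. (C p k + (if p = Suc j then \<delta> * C j k else 0)) * B k q)"
    using hC by (intro sum.cong) auto
  also have "\<dots> = (\<Sum>k=1..n. C p k * B k q) + (if p = Suc j then \<delta> * (\<Sum>k=1..n. C j k * B k q) else 0)"
    by (simp add: sum.distrib distrib_right sum_distrib_left algebra_simps)
  finally show ?thesis .
qed



lemma esym_Suc:
  fixes y :: "nat \<Rightarrow> 'a::field"
  shows "esym (Suc k) y (Suc r) = esym (Suc k) y r + y (Suc r) * esym k y r"
proof -
  let ?A = "{T. T \<subseteq> {1..r} \<and> card T = Suc k}"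
  let ?S = "{S. S \<subseteq> {1..r} \<and> card S = k}"
  let ?B = "insert (Suc r) ` ?S"
  have eq: "{T. T \<subseteq> {1..Suc r} \<and> card T = Suc k} = ?A \<union> ?B"
  proof (intro equalityI subsetI)
    fix T assume "T \<in> {T. T \<subseteq> {1..Suc r} \<and> card T = Suc k}"
    then have T: "T \<subseteq> {1..Suc r}" "card T = Suc k" by auto
    show "T \<in> ?A \<union> ?B"
    proof (cases "Suc r \<in> T")
      case True
      have fT: "finite T" using T(1) finite_subset by blast
      have "T - {Suc r} \<in> ?S" using T True fT by auto
      moreover have "T = insert (Suc r) (T - {Suc r})" using True by auto
      ultimately show ?thesis by blast
    next
      case False
      then have "T \<subseteq> {1..r}" using T(1) by (auto simp: le_Suc_eq)
      then show ?thesis using T by auto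
    qed
  next
    fix T assume "T \<in> ?A \<union> ?B"
    then show "T \<in> {T. T \<subseteq> {1..Suc r} \<and> card T = Suc k}"
    proof
      assume "T \<in> ?A" then show ?thesis by auto
    next
      assume "T \<in> ?B"
      then obtain S where S: "S \<subseteq> {1..r}" "card S = k" and TS: "T = insert (Suc r) S" by auto
      have "finite S" using S(1) finite_subset by blast
      moreover have "Suc r \<notin> S" using S(1) by auto
      ultimately show ?thesis using S TS by auto
    qed
  qed
  have fA: "finite ?A" by (rule finite_subset[of _ "Pow {1..r}"]) auto
  have fS: "finite ?S" by (rule finite_subset[of _ "Pow {1..r}"]) auto
  have disj: "?A \<inter> ?B = {}" by auto
  have inj: "inj_on (insert (Suc r)) ?S"
  proof (rule inj_onI)
    fix S1 S2 assume "S1 \<in> ?S" "S2 \<in> ?S" "insert (Suc r) S1 = insert (Suc r) S2"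
    then have "Suc r \<notin> S1" "Suc r \<notin> S2" "insert (Suc r) S1 = insert (Suc r) S2" by auto
    then show "S1 = S2" by (metis Diff_insert_absorb)
  qed
  have "esym (Suc k) y (Suc r) = (\<Sum>T\<in>?A. \<Prod>t\<in>T. y t) + (\<Sum>T\<in>?B. \<Prod>t\<in>T. y t)"
    unfolding esym_def eq using fA fS disj by (simp add: sum.union_disjoint)
  also have "(\<Sum>T\<in>?B. \<Prod>t\<in>T. y t) = (\<Sum>S\<in>?S. \<Prod>t\<in>insert (Suc r) S. y t)"
    using inj by (simp add: sum.reindex)
  also have "\<dots> = (\<Sum>S\<in>?S. y (Suc r) * (\<Prod>t\<in>S. y t))"
  proof (rule sum.cong[OF refl])
    fix S assume "S \<in> ?S"
    then have "finite S" "Suc r \<notin> S" using finite_subset by auto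
    then show "(\<Prod>t\<in>insert (Suc r) S. y t) = y (Suc r) * (\<Prod>t\<in>S. y t)" by simp
  qed
  finally show ?thesis unfolding esym_def by (simp add: sum_distrib_left)
qed

lemma esym_0: "esym 0 y r = 1"
proof -
  have "{T. T \<subseteq> {1..r} \<and> card T = 0} = {{}}"
  proof (intro equalityI subsetI)
    fix T assume "T \<in> {T. T \<subseteq> {1..r} \<and> card T = 0}"
    then have "T \<subseteq> {1..r}" "card T = 0" by auto
    moreover have "finite T" using calculation(1) finite_subset by blast
    ultimately show "T \<in> {{}}" by simp
  qed auto
  then show ?thesis unfolding esym_def by simp
qed

lemma esym_cong:
  assumes "\<forall>t\<in>{1..r}. y t = z t"
  shows "esym k y r = esym k z r"
  unfolding esym_def
proof (rule sum.cong[OF refl], rule prod.cong[OF refl])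
  fix T t assume "T \<in> {T. T \<subseteq> {1..r} \<and> card T = k}" "t \<in> T"
  then show "y t = z t" using assms by auto
qed

lemma esym_swap:
  fixes x :: "nat \<Rightarrow> 'a::field"
  assumes "Suc j \<le> r" "1 \<le> j"
  shows "esym k (swp j x) r = esym k x r"
proof -
  define \<sigma> where "\<sigma> = Transposition.transpose j (Suc j)"
  let ?F = "{T. T \<subseteq> {1..r} \<and> card T = k}"
  have s1r: "\<sigma> ` {1..r} = {1..r}" unfolding \<sigma>_def using assms by (intro transpose_image_same) auto
  have injs: "inj \<sigma>" unfolding \<sigma>_def by simp
  have ss: "\<sigma> ` (\<sigma> ` T) = T" for T unfolding \<sigma>_def by (simp add: image_comp)
  have imF: "(\<lambda>T. \<sigma> ` T) ` ?F = ?F"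
  proof (intro equalityI subsetI)
    fix U assume "U \<in> (\<lambda>T. \<sigma> ` T) ` ?F"
    then obtain T where T: "T \<in> ?F" "U = \<sigma> ` T" by auto
    have "\<sigma> ` T \<subseteq> {1..r}" using T s1r by auto
    moreover have "card (\<sigma> ` T) = k" using T card_image[OF inj_on_subset[OF injs]] by auto
    ultimately show "U \<in> ?F" using T by auto
  next
    fix U assume U: "U \<in> ?F"
    have "\<sigma> ` U \<subseteq> {1..r}" using U s1r by auto
    moreover have "card (\<sigma> ` U) = k" using U card_image[OF inj_on_subset[OF injs]] by auto
    ultimately have "\<sigma> ` U \<in> ?F" by auto
    then show "U \<in> (\<lambda>T. \<sigma> ` T) ` ?F" using ss[of U] by (metis image_eqI)
  qed
  have injF: "inj_on (\<lambda>T. \<sigma> ` T) ?F" by (rule inj_onI) (metis ss)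
  have "esym k (swp j x) r = (\<Sum>T\<in>?F. \<Prod>t\<in>T. x (\<sigma> t))" unfolding esym_def swp_comp \<sigma>_def by simp
  also have "\<dots> = (\<Sum>T\<in>?F. \<Prod>t\<in>\<sigma> ` T. x t)"
    by (rule sum.cong[OF refl]) (simp add: prod.reindex inj_on_subset[OF injs])
  also have "\<dots> = (\<Sum>T\<in>(\<lambda>T. \<sigma> ` T) ` ?F. \<Prod>t\<in>T. x t)"
    using injF by (simp add: sum.reindex)
  also have "\<dots> = esym k x r" unfolding imF esym_def ..
  finally show ?thesis .
qed

lemma PS:
  fixes x :: "nat \<Rightarrow> 'a::field"
  assumes j: "1 \<le> j"
  shows "Pmat (swp j x) p q = Pmat x p q + (if p = Suc j then (x (Suc j) - x j) * Pmat x j q else 0)"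
proof (cases "p = Suc j")
  case True
  show ?thesis
  proof (cases "q \<le> j")
    case qj: True
    obtain k where k: "j - q = k" by blast
    have a1: "Suc j - q = Suc k" using qj k by simp
    obtain r where r: "j = Suc r" using j by (cases j) auto
    have c1: "esym i (swp j x) r = esym i x r" for i
      by (rule esym_cong) (auto simp: swp_def r)
    have "Pmat (swp j x) p q = esym (Suc k) (swp j x) j"
      unfolding Pmat_def using True qj a1 by simp
    also have "\<dots> = esym (Suc k) x r + x (Suc j) * esym k x r"
      unfolding r esym_Suc using c1 by (simp add: swp_def r)
    also have "\<dots> = (esym (Suc k) x r + x j * esym k x r) + (x (Suc j) - x j) * esym k x r"
      by (simp add: algebra_simps)
    also have "\<dots> = Pmat x p q + (x (Suc j) - x j) * Pmat x j q"
      unfolding Pmat_def using True qj a1 k by (simp add: r esym_Suc)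
    finally show ?thesis using True by simp
  next
    case False
    then show ?thesis using True unfolding Pmat_def by (auto simp: esym_0)
  qed
next
  case False
  show ?thesis
  proof (cases "p \<le> j")
    case True
    have "esym (p - q) (swp j x) (p - 1) = esym (p - q) x (p - 1)"
      by (rule esym_cong) (use True in \<open>auto simp: swp_def\<close>)
    then show ?thesis using False unfolding Pmat_def by simp
  next
    case pj: False
    then have "Suc j \<le> p - 1" using False by simp
    then show ?thesis using False j esym_swap[of j "p - 1" "p - q" x] unfolding Pmat_def by simp
  qed
qed

lemma AS:
  fixes x :: "nat \<Rightarrow> 'a::field"
  shows "Amat (swp j x) p q + (if q = j then (x (Suc j) - x j) * Amat (swp j x) p (Suc j) else 0)
       = Amat x p q + (if p = Suc j then (x (Suc j) - x j) * Amat x j q else 0)"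
  unfolding Amat_def swp_def by (auto simp: algebra_simps)



lemma det_rowop_gen:
  fixes M M' :: "nat \<Rightarrow> nat \<Rightarrow> 'a::field ps"
  assumes j: "1 \<le> j" and i: "i \<le> n"
    and h: "\<forall>p\<in>{1..n}. \<forall>q. M' p q = (\<lambda>m. M p q m + (if p = Suc j then c * M j q m else 0))"
  shows "ps_det i M' = ps_det i M"
proof (cases "Suc j \<le> i")
  case True
  have "ps_det i M' = ps_det i (\<lambda>r. if r = Suc j then (\<lambda>q m. M (Suc j) q m + c * M j q m) else M r)"
    by (rule ps_det_cong) (use h i in auto)
  also have "\<dots> = ps_det i M" by (rule ps_det_rowop[OF j True])
  finally show ?thesis .
next
  case False
  show ?thesis by (rule ps_det_cong) (use h i False in auto)
qed

theorem corollary5p3: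
  fixes x :: "nat \<Rightarrow> 'a::field" and n i j :: nat
  assumes "n \<ge> 2"
    and "\<forall>p\<in>{1..n}. \<forall>q\<in>{1..n}. p \<noteq> q \<longrightarrow> x p \<noteq> x q"
    and "(\<Prod>p=1..n. x p) = 1"
    and "1 \<le> i" and "i \<le> n" and "1 \<le> j" and "j \<le> n - 1"
  shows "tau n (swp j x) i = tau n x i \<and> sigma n (swp j x) i = sigma n x i"
proof -
  have inj: "inj_on x {1..n}" using assms(2) by (auto intro: inj_onI)
  have j: "1 \<le> j" "Suc j \<le> n" using assms by auto
  define \<delta> where "\<delta> = x (Suc j) - x j"
  have PS': "\<forall>k\<in>{1..n}. Pmat (swp j x) k q = Pmat x k q + (if k = Suc j then \<delta> * Pmat x j q else 0)" for q
    unfolding \<delta>_def using PS[OF j(1)] by blast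
  have AP: "scal_mat n (Amat (swp j x)) (Pmat (swp j x)) p q = scal_mat n (Amat x) (Pmat x) p q + (if p = Suc j then \<delta> * scal_mat n (Amat x) (Pmat x) j q else 0)" for p q
  proof -
    have hC: "\<forall>k\<in>{1..n}. Amat (swp j x) p k + (if k = j then \<delta> * Amat (swp j x) p (Suc j) else 0) = Amat x p k + (if p = Suc j then \<delta> * Amat x j k else 0)"
      unfolding \<delta>_def using AS by blast
    show ?thesis unfolding scal_mat_def
      by (rule rowop_prod[where B' = "Pmat (swp j x)" and B = "Pmat x" and C' = "Amat (swp j x)" and C = "Amat x", OF j PS' hC])
  qed
  have sig: "\<forall>p\<in>{1..n}. \<forall>q. ps_mat_scal n (Zmat (swp j x)) (Pmat (swp j x)) p q =
      (\<lambda>m. ps_mat_scal n (Zmat x) (Pmat x) p q m + (if p = Suc j then \<delta> * ps_mat_scal n (Zmat x) (Pmat x) j q m else 0))"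
  proof (intro ballI allI ext)
    fix p q m assume p: "p \<in> {1..n}"
    have hC: "\<forall>k\<in>{1..n}. Zmat (swp j x) p k m + (if k = j then \<delta> * Zmat (swp j x) p (Suc j) m else 0) = Zmat x p k m + (if p = Suc j then \<delta> * Zmat x j k m else 0)"
      unfolding \<delta>_def using ZS[OF inj j] p by auto
    show "ps_mat_scal n (Zmat (swp j x)) (Pmat (swp j x)) p q m =
      ps_mat_scal n (Zmat x) (Pmat x) p q m + (if p = Suc j then \<delta> * ps_mat_scal n (Zmat x) (Pmat x) j q m else 0)"
      unfolding ps_mat_scal_def
      by (rule rowop_prod[where C' = "\<lambda>p k. Zmat (swp j x) p k m" and C = "\<lambda>p k. Zmat x p k m" and B' = "Pmat (swp j x)" and B = "Pmat x", OF j PS' hC])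
  qed
  have ta: "\<forall>p\<in>{1..n}. \<forall>q. ps_mat_scal n (Zmat (swp j x)) (scal_mat n (Amat (swp j x)) (Pmat (swp j x))) p q =
      (\<lambda>m. ps_mat_scal n (Zmat x) (scal_mat n (Amat x) (Pmat x)) p q m + (if p = Suc j then \<delta> * ps_mat_scal n (Zmat x) (scal_mat n (Amat x) (Pmat x)) j q m else 0))"
  proof (intro ballI allI ext)
    fix p q m assume p: "p \<in> {1..n}"
    have hC: "\<forall>k\<in>{1..n}. Zmat (swp j x) p k m + (if k = j then \<delta> * Zmat (swp j x) p (Suc j) m else 0) = Zmat x p k m + (if p = Suc j then \<delta> * Zmat x j k m else 0)"
      unfolding \<delta>_def using ZS[OF inj j] p by auto
    have hB: "\<forall>k\<in>{1..n}. scal_mat n (Amat (swp j x)) (Pmat (swp j x)) k q = scal_mat n (Amat x) (Pmat x) k q + (if k = Suc j then \<delta> * scal_mat n (Amat x) (Pmat x) j q else 0)"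
      using AP by blast
    show "ps_mat_scal n (Zmat (swp j x)) (scal_mat n (Amat (swp j x)) (Pmat (swp j x))) p q m =
      ps_mat_scal n (Zmat x) (scal_mat n (Amat x) (Pmat x)) p q m + (if p = Suc j then \<delta> * ps_mat_scal n (Zmat x) (scal_mat n (Amat x) (Pmat x)) j q m else 0)"
      unfolding ps_mat_scal_def
      by (rule rowop_prod[where C' = "\<lambda>p k. Zmat (swp j x) p k m" and C = "\<lambda>p k. Zmat x p k m" and B' = "scal_mat n (Amat (swp j x)) (Pmat (swp j x))" and B = "scal_mat n (Amat x) (Pmat x)", OF j hB hC])
  qed
  show ?thesis unfolding tau_def sigma_def
    using det_rowop_gen[OF j(1) assms(5) sig] det_rowop_gen[OF j(1) assms(5) ta] by simp
qed

end
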